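(* Let $\mathcal{F}$ be a class of simple graphs and consider the assertions: (1) $\mathcal{F}$ is closed under deleting edges; (2) $\equiv_{\mathcal{F}}$ is preserved under taking full complements, i.e.\ for all simple graphs $G$ and $H$ it holds that $G\equiv_{\mathcal{F}}H$ if and only if $\widehat{G}\equiv_{\mathcal{F}}\widehat{H}$; (3) $\mathrm{cl}(\mathcal{F})$ is closed under deleting edges; (4) $\mathrm{cl}(\mathcal{F})$ is closed under taking subgraphs, i.e.\ under deleting edges and vertices; (5) $\equiv_{\mathrm{cl}(\mathcal{F})}$ is preserved under taking full complements. Then (1) implies (2), (2) implies (3), and (3), (4), (5) are pairwise equivalent.
   Context: Graphs are finite, undirected, without multiple edges, possibly with loops; simple means without loops. A homomorphism maps edges to edges (possibly loops) and looped vertices to looped vertices; $\hom(F,G)$ counts homomorphisms. $G\equiv_{\mathcal{F}}H$ means $\hom(F,G)=\hom(F,H)$ for all $F\in\mathcal{F}$. $\mathrm{cl}(\mathcal{F})$ is the class of all simple graphs $K$ such that for all simple $G,H$, $G\equiv_{\mathcal{F}}H$ implies $\hom(K,G)=\hom(K,H)$. The full complement $\widehat{G}$ of a graph $G$ has vertex set $V(G)$; for distinct $u,v$, $uv$ is an edge of $\widehat G$ iff it is not an edge of $G$, and $v$ has a loop in $\widehat G$ iff it has no loop in $G$. *)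

theory Defs
  imports Main "HOL-Library.FuncSet"
begin

text \<open>A graph is a pair (V, E) with vertices from nat: V finite, E a symmetric
  relation on V.  A loop at v is the pair (v,v) in E.\<close>

type_synonym graph = "nat set \<times> (nat \<times> nat) set"

definition verts :: "graph \<Rightarrow> nat set" where "verts G = fst G"
definition edges :: "graph \<Rightarrow> (nat \<times> nat) set" where "edges G = snd G"

definition is_graph :: "graph \<Rightarrow> bool" where
  "is_graph G \<longleftrightarrow> finite (verts G) \<and> edges G \<subseteq> verts G \<times> verts G \<and> sym (edges G)"

definition simple_graph :: "graph \<Rightarrow> bool" where
  "simple_graph G \<longleftrightarrow> is_graph G \<and> (\<forall>v. (v, v) \<notin> edges G)"

definition homs :: "graph \<Rightarrow> graph \<Rightarrow> (nat \<Rightarrow> nat) set" where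
  "homs F G = {f \<in> verts F \<rightarrow>\<^sub>E verts G. \<forall>(u, v) \<in> edges F. (f u, f v) \<in> edges G}"

definition hom :: "graph \<Rightarrow> graph \<Rightarrow> nat" where
  "hom F G = card (homs F G)"

definition hom_equiv :: "graph set \<Rightarrow> graph \<Rightarrow> graph \<Rightarrow> bool" where
  "hom_equiv \<F> G H \<longleftrightarrow> (\<forall>F \<in> \<F>. hom F G = hom F H)"

definition cl :: "graph set \<Rightarrow> graph set" where
  "cl \<F> = {K. simple_graph K \<and>
     (\<forall>G H. simple_graph G \<longrightarrow> simple_graph H \<longrightarrow> hom_equiv \<F> G H \<longrightarrow> hom K G = hom K H)}"

text \<open>Full complement: same vertices; distinct u v adjacent iff not adjacent in G;
  v looped iff not looped in G.\<close>
definition full_compl :: "graph \<Rightarrow> graph" where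
  "full_compl G = (verts G, {(u, v) \<in> verts G \<times> verts G. (u, v) \<notin> edges G})"

definition closed_del_edges :: "graph set \<Rightarrow> bool" where
  "closed_del_edges \<F> \<longleftrightarrow>
     (\<forall>F \<in> \<F>. \<forall>E'. E' \<subseteq> edges F \<and> sym E' \<longrightarrow> (verts F, E') \<in> \<F>)"

definition closed_subgraphs :: "graph set \<Rightarrow> bool" where
  "closed_subgraphs \<F> \<longleftrightarrow>
     (\<forall>F \<in> \<F>. \<forall>V' E'. V' \<subseteq> verts F \<and> E' \<subseteq> edges F \<inter> (V' \<times> V') \<and> sym E'
        \<longrightarrow> (V', E') \<in> \<F>)"

definition compl_preserved :: "graph set \<Rightarrow> bool" where
  "compl_preserved \<F> \<longleftrightarrow>
     (\<forall>G H. simple_graph G \<longrightarrow> simple_graph H \<longrightarrow>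
        (hom_equiv \<F> G H \<longleftrightarrow> hom_equiv \<F> (full_compl G) (full_compl H)))"

end

theory Submission
  imports Defs "HOL-Library.Nat_Bijection" "HOL-Computational_Algebra.Polynomial"
begin


lemma verts_pair[simp]: "verts (V,E) = V" by (simp add: verts_def)
lemma edges_pair[simp]: "edges (V,E) = E" by (simp add: edges_def)

lemma homs_finite: "finite (verts F) \<Longrightarrow> finite (verts G) \<Longrightarrow> finite (homs F G)"
  unfolding homs_def by (rule finite_subset[OF _ finite_PiE[of "verts F" "\<lambda>_. verts G"]]) auto

definition tp :: "graph \<Rightarrow> graph \<Rightarrow> graph" where
  "tp G X = (prod_encode ` (verts G \<times> verts X),
    {(p,q). (fst (prod_decode p), fst (prod_decode q)) \<in> edges G \<and>
            (snd (prod_decode p), snd (prod_decode q)) \<in> edges X})"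

lemma mem_tp_verts: "p \<in> verts (tp G X) \<longleftrightarrow> fst (prod_decode p) \<in> verts G \<and> snd (prod_decode p) \<in> verts X"
proof
  assume "p \<in> verts (tp G X)"
  then show "fst (prod_decode p) \<in> verts G \<and> snd (prod_decode p) \<in> verts X"
    by (auto simp: tp_def prod_encode_inverse)
next
  assume a: "fst (prod_decode p) \<in> verts G \<and> snd (prod_decode p) \<in> verts X"
  have "(fst (prod_decode p), snd (prod_decode p)) \<in> verts G \<times> verts X" using a by (simp add: mem_Times_iff)
  then have "prod_encode (fst (prod_decode p), snd (prod_decode p)) \<in> prod_encode ` (verts G \<times> verts X)"
    by (rule imageI)
  then show "p \<in> verts (tp G X)" by (simp add: tp_def)
qed

lemma mem_tp_edges: "(p,q) \<in> edges (tp G X) \<longleftrightarrow> (fst (prod_decode p), fst (prod_decode q)) \<in> edges G \<and>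
            (snd (prod_decode p), snd (prod_decode q)) \<in> edges X"
  by (simp add: tp_def)

lemma tp_graph:
  assumes "is_graph G" "is_graph X"
  shows "is_graph (tp G X)"
proof -
  have "finite (verts (tp G X))" using assms by (simp add: tp_def is_graph_def)
  moreover have "edges (tp G X) \<subseteq> verts (tp G X) \<times> verts (tp G X)"
    using assms unfolding is_graph_def by (auto simp: mem_tp_verts mem_tp_edges)
  moreover have "sym (edges (tp G X))"
    using assms unfolding is_graph_def sym_def by (auto simp: mem_tp_edges)
  ultimately show ?thesis by (simp add: is_graph_def)
qed

lemma tp_simple:
  assumes "is_graph G" "is_graph X" "(\<forall>v. (v,v) \<notin> edges G) \<or> (\<forall>v. (v,v) \<notin> edges X)"
  shows "simple_graph (tp G X)"
  using assms tp_graph unfolding simple_graph_def by (auto simp: mem_tp_edges)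

lemma hom_tp:
  assumes F: "edges F \<subseteq> verts F \<times> verts F"
  shows "hom F (tp G X) = hom F G * hom F X"
proof -
  let ?f = "\<lambda>f. (\<lambda>v\<in>verts F. fst (prod_decode (f v)), \<lambda>v\<in>verts F. snd (prod_decode (f v)))"
  let ?g = "\<lambda>(g,h). \<lambda>v\<in>verts F. prod_encode (g v, h v)"
  have "bij_betw ?f (homs F (tp G X)) (homs F G \<times> homs F X)"
  proof (rule bij_betw_byWitness[where f'="?g"])
    show "\<forall>a\<in>homs F (tp G X). ?g (?f a) = a"
    proof
      fix a assume "a \<in> homs F (tp G X)"
      then have "a \<in> extensional (verts F)" by (simp add: homs_def PiE_def)
      then show "?g (?f a) = a" by (simp add: fun_eq_iff prod_decode_inverse extensional_def)
    qed
    show "\<forall>a'\<in>homs F G \<times> homs F X. ?f (?g a') = a'"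
    proof
      fix a' assume "a' \<in> homs F G \<times> homs F X"
      then obtain g h where a': "a' = (g,h)" "g \<in> extensional (verts F)" "h \<in> extensional (verts F)"
        by (auto simp: homs_def PiE_def)
      then show "?f (?g a') = a'" by (simp add: fun_eq_iff prod_encode_inverse extensional_def)
    qed
    show "?f ` homs F (tp G X) \<subseteq> homs F G \<times> homs F X"
    proof
      fix y assume "y \<in> ?f ` homs F (tp G X)"
      then obtain f where f: "f \<in> homs F (tp G X)" and y: "y = ?f f" by blast
      have "\<And>u v. (u,v) \<in> edges F \<Longrightarrow> u \<in> verts F \<and> v \<in> verts F" using F by blast
      then show "y \<in> homs F G \<times> homs F X" using f unfolding y homs_def
        by (auto simp: mem_tp_verts mem_tp_edges PiE_iff)
    qed
    show "?g ` (homs F G \<times> homs F X) \<subseteq> homs F (tp G X)"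
    proof
      fix y assume "y \<in> ?g ` (homs F G \<times> homs F X)"
      then obtain g h where gh: "g \<in> homs F G" "h \<in> homs F X" and y: "y = ?g (g,h)" by blast
      have "\<And>u v. (u,v) \<in> edges F \<Longrightarrow> u \<in> verts F \<and> v \<in> verts F" using F by blast
      then show "y \<in> homs F (tp G X)" using gh unfolding y homs_def
        by (auto simp: mem_tp_verts mem_tp_edges PiE_iff prod_encode_inverse)
    qed
  qed
  then have "card (homs F (tp G X)) = card (homs F G \<times> homs F X)" by (rule bij_betw_same_card)
  then show ?thesis unfolding hom_def by (simp only: card_cartesian_product)
qed


lemma full_compl_verts[simp]: "verts (full_compl G) = verts G" by (simp add: full_compl_def)
lemma full_compl_edges: "edges (full_compl G) = {(u, v) \<in> verts G \<times> verts G. (u, v) \<notin> edges G}"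
  by (simp add: full_compl_def)

lemma compl_graph: "is_graph G \<Longrightarrow> is_graph (full_compl G)"
  unfolding is_graph_def full_compl_edges sym_def by auto

lemma compl_compl: "is_graph G \<Longrightarrow> full_compl (full_compl G) = G"
  by (cases G) (auto simp: is_graph_def full_compl_def)

lemma card_filter_int: "finite M \<Longrightarrow> int (card {x\<in>M. Q x}) = (\<Sum>x\<in>M. if Q x then 1 else 0)"
proof -
  assume "finite M"
  have "int (card {x\<in>M. Q x}) = (\<Sum>x\<in>{x\<in>M. Q x}. 1)" by simp
  also have "\<dots> = (\<Sum>x\<in>M. if Q x then 1 else 0)" using \<open>finite M\<close> by (rule sum.inter_filter)
  finally show ?thesis .
qed

lemma prod_ind: "finite X \<Longrightarrow> (\<Prod>e\<in>X. (if P e then 1 else 0 :: int)) = (if \<forall>e\<in>X. P e then 1 else 0)"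
  by (induction X rule: finite_induct) auto

lemma prod_one_minus:
  fixes a :: "'b \<Rightarrow> int"
  assumes "finite U"
  shows "(\<Prod>e\<in>U. 1 - a e) = (\<Sum>S\<in>Pow U. (-1)^card S * (\<Prod>e\<in>S. a e))"
proof -
  have "(\<Prod>e\<in>U. 1 - a e) = (\<Prod>e\<in>U. (- a e) + 1)" by simp
  also have "\<dots> = (\<Sum>S\<in>Pow U. (\<Prod>e\<in>S. - a e) * (\<Prod>e\<in>U - S. 1))"
    using assms by (rule prod_add)
  also have "\<dots> = (\<Sum>S\<in>Pow U. (-1)^card S * (\<Prod>e\<in>S. a e))"
  proof (rule sum.cong)
    fix S assume "S \<in> Pow U"
    have "(\<Prod>e\<in>S. - a e) = (\<Prod>e\<in>S. (-1) * a e)" by simp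
    also have "\<dots> = (\<Prod>e\<in>S. -1) * (\<Prod>e\<in>S. a e)" by (rule prod.distrib)
    also have "\<dots> = (-1)^card S * (\<Prod>e\<in>S. a e)" by simp
    finally show "(\<Prod>e\<in>S. - a e) * (\<Prod>e\<in>U - S. 1) = (-1)^card S * (\<Prod>e\<in>S. a e)" by simp
  qed simp
  finally show ?thesis .
qed

lemma ie_count:
  assumes "finite M" "finite U"
  shows "int (card {f\<in>M. \<forall>e\<in>U. \<not> P f e}) = (\<Sum>S\<in>Pow U. (-1)^card S * int (card {f\<in>M. \<forall>e\<in>S. P f e}))"
proof -
  have "int (card {f\<in>M. \<forall>e\<in>U. \<not> P f e}) = (\<Sum>f\<in>M. if \<forall>e\<in>U. \<not> P f e then 1 else 0)"
    using assms(1) by (rule card_filter_int)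
  also have "\<dots> = (\<Sum>f\<in>M. \<Prod>e\<in>U. 1 - (if P f e then 1 else 0))"
  proof (rule sum.cong)
    fix f assume "f \<in> M"
    have "(\<Prod>e\<in>U. 1 - (if P f e then 1 else 0 :: int)) = (\<Prod>e\<in>U. (if \<not> P f e then 1 else 0))"
      by (rule prod.cong) auto
    also have "\<dots> = (if \<forall>e\<in>U. \<not> P f e then 1 else 0)" using assms(2) by (rule prod_ind)
    finally show "(if \<forall>e\<in>U. \<not> P f e then 1 else 0) = (\<Prod>e\<in>U. 1 - (if P f e then 1 else 0 :: int))" by simp
  qed simp
  also have "\<dots> = (\<Sum>f\<in>M. \<Sum>S\<in>Pow U. (-1)^card S * (\<Prod>e\<in>S. (if P f e then 1 else 0)))"
    using assms(2) by (simp add: prod_one_minus)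
  also have "\<dots> = (\<Sum>S\<in>Pow U. \<Sum>f\<in>M. (-1)^card S * (\<Prod>e\<in>S. (if P f e then 1 else 0)))"
    by (rule sum.swap)
  also have "\<dots> = (\<Sum>S\<in>Pow U. (-1)^card S * int (card {f\<in>M. \<forall>e\<in>S. P f e}))"
  proof (rule sum.cong)
    fix S assume "S \<in> Pow U"
    then have fS: "finite S" using assms(2) finite_subset by auto
    have "(\<Sum>f\<in>M. (-1)^card S * (\<Prod>e\<in>S. (if P f e then 1 else 0))) =
          (-1)^card S * (\<Sum>f\<in>M. (\<Prod>e\<in>S. (if P f e then 1 else 0 :: int)))"
      by (simp add: sum_distrib_left)
    also have "(\<Sum>f\<in>M. (\<Prod>e\<in>S. (if P f e then 1 else 0 :: int))) = (\<Sum>f\<in>M. if \<forall>e\<in>S. P f e then 1 else 0)"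
      using fS by (simp add: prod_ind)
    also have "\<dots> = int (card {f\<in>M. \<forall>e\<in>S. P f e})" using assms(1) by (rule card_filter_int[symmetric])
    finally show "(\<Sum>f\<in>M. (-1)^card S * (\<Prod>e\<in>S. (if P f e then 1 else 0))) =
          (-1)^card S * int (card {f\<in>M. \<forall>e\<in>S. P f e})" .
  qed simp
  finally show ?thesis .
qed

definition uedges :: "(nat \<times> nat) set \<Rightarrow> nat set set" where
  "uedges E = (\<lambda>(u,v). {u,v}) ` E"

definition eo :: "nat set set \<Rightarrow> (nat \<times> nat) set" where
  "eo S = {(u,v). u \<noteq> v \<and> {u,v} \<in> S}"

lemma sym_eo: "sym (eo S)" unfolding sym_def eo_def by (auto simp: insert_commute)

lemma mem_uedges: "e \<in> uedges E \<longleftrightarrow> (\<exists>u v. (u,v) \<in> E \<and> e = {u,v})"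
  unfolding uedges_def by auto

lemma eo_sub:
  assumes "simple_graph F" "S \<subseteq> uedges (edges F)"
  shows "eo S \<subseteq> edges F"
proof
  fix p assume "p \<in> eo S"
  then obtain u v where p: "p = (u,v)" "u \<noteq> v" "{u,v} \<in> S" by (auto simp: eo_def)
  have "{u,v} \<in> uedges (edges F)" using assms(2) p(3) by blast
  then obtain a b where ab: "(a,b) \<in> edges F" "{u,v} = {a,b}" unfolding mem_uedges by blast
  have "sym (edges F)" using assms(1) by (simp add: simple_graph_def is_graph_def)
  then show "p \<in> edges F" using ab p unfolding doubleton_eq_iff sym_def by auto
qed

lemma IE:
  assumes F: "simple_graph F" and G: "is_graph G"
  shows "int (hom F (full_compl G)) =
    (\<Sum>S\<in>Pow (uedges (edges F)). (-1)^card S * int (hom (verts F, eo S) G))"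
proof -
  let ?M = "verts F \<rightarrow>\<^sub>E verts G"
  let ?U = "uedges (edges F)"
  define hit where "hit f e \<longleftrightarrow> (\<exists>u v. e = {u,v} \<and> u \<noteq> v \<and> (f u, f v) \<in> edges G)" for f :: "nat \<Rightarrow> nat" and e
  have fF: "finite (verts F)" and EF: "edges F \<subseteq> verts F \<times> verts F" and sF: "sym (edges F)"
    and lF: "\<forall>v. (v,v) \<notin> edges F"
    using F by (auto simp: simple_graph_def is_graph_def)
  have fG: "finite (verts G)" and sG: "sym (edges G)" using G by (auto simp: is_graph_def)
  have fM: "finite ?M" using fF fG by (simp add: finite_PiE)
  have fU: "finite ?U" using fF EF unfolding uedges_def
    by (meson finite_SigmaI finite_imageI finite_subset)
  have A: "homs F (full_compl G) = {f\<in>?M. \<forall>e\<in>?U. \<not> hit f e}"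
  proof (intro equalityI subsetI)
    fix f assume f: "f \<in> homs F (full_compl G)"
    then have fM: "f \<in> ?M" by (simp add: homs_def)
    have "\<not> hit f e" if "e \<in> ?U" for e
    proof
      assume "hit f e"
      then obtain u v where uv: "e = {u,v}" "u \<noteq> v" "(f u, f v) \<in> edges G" by (auto simp: hit_def)
      obtain a b where ab: "(a,b) \<in> edges F" "e = {a,b}" using \<open>e \<in> ?U\<close> unfolding mem_uedges by blast
      have "{u,v} = {a,b}" using ab uv by simp
      then have "(u=a \<and> v=b) \<or> (u=b \<and> v=a)" by (simp add: doubleton_eq_iff)
      then have "(u,v) \<in> edges F" using ab sF unfolding sym_def by auto
      then have "(f u, f v) \<in> edges (full_compl G)" using f by (auto simp: homs_def)
      then show False using uv by (simp add: full_compl_edges)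
    qed
    then show "f \<in> {f\<in>?M. \<forall>e\<in>?U. \<not> hit f e}" using fM by blast
  next
    fix f assume f: "f \<in> {f\<in>?M. \<forall>e\<in>?U. \<not> hit f e}"
    have "(f a, f b) \<in> edges (full_compl G)" if ab: "(a,b) \<in> edges F" for a b
    proof -
      have "a \<noteq> b" using lF ab by auto
      moreover have "{a,b} \<in> ?U" using ab by (auto simp: mem_uedges)
      ultimately have "(f a, f b) \<notin> edges G" using f by (auto simp: hit_def)
      moreover have "f a \<in> verts G" "f b \<in> verts G" using f ab EF by auto
      ultimately show ?thesis by (simp add: full_compl_edges)
    qed
    then show "f \<in> homs F (full_compl G)" using f by (auto simp: homs_def)
  qed
  have B: "homs (verts F, eo S) G = {f\<in>?M. \<forall>e\<in>S. hit f e}" if S: "S \<subseteq> ?U" for S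
  proof (intro equalityI subsetI)
    fix f assume f: "f \<in> homs (verts F, eo S) G"
    have "hit f e" if "e \<in> S" for e
    proof -
      have "e \<in> ?U" using \<open>e \<in> S\<close> S by blast
      then obtain a b where ab: "(a,b) \<in> edges F" "e = {a,b}" unfolding mem_uedges by blast
      have "a \<noteq> b" using lF ab by auto
      then have "(a,b) \<in> eo S" using ab \<open>e \<in> S\<close> by (simp add: eo_def)
      then have "(f a, f b) \<in> edges G" using f by (auto simp: homs_def)
      then show ?thesis using ab \<open>a \<noteq> b\<close> by (auto simp: hit_def)
    qed
    then show "f \<in> {f\<in>?M. \<forall>e\<in>S. hit f e}" using f by (auto simp: homs_def)
  next
    fix f assume f: "f \<in> {f\<in>?M. \<forall>e\<in>S. hit f e}"
    have "(f u, f v) \<in> edges G" if uv: "(u,v) \<in> eo S" for u v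
    proof -
      have "u \<noteq> v" "{u,v} \<in> S" using uv by (auto simp: eo_def)
      then obtain a b where ab: "{u,v} = {a,b}" "a \<noteq> b" "(f a, f b) \<in> edges G" using f by (auto simp: hit_def)
      then have "(u=a \<and> v=b) \<or> (u=b \<and> v=a)" by (simp add: doubleton_eq_iff)
      then show ?thesis using ab sG unfolding sym_def by auto
    qed
    then show "f \<in> homs (verts F, eo S) G" using f by (auto simp: homs_def)
  qed
  have "int (hom F (full_compl G)) = int (card {f\<in>?M. \<forall>e\<in>?U. \<not> hit f e})"
    by (simp add: hom_def A)
  also have "\<dots> = (\<Sum>S\<in>Pow ?U. (-1)^card S * int (card {f\<in>?M. \<forall>e\<in>S. hit f e}))"
    using fM fU by (rule ie_count)
  also have "\<dots> = (\<Sum>S\<in>Pow ?U. (-1)^card S * int (hom (verts F, eo S) G))"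
    by (rule sum.cong) (auto simp: hom_def B)
  finally show ?thesis .
qed




lemma artin:
  fixes P :: "(graph \<Rightarrow> int) set" and c :: "(graph \<Rightarrow> int) \<Rightarrow> int"
  assumes "finite P"
    and "\<forall>\<psi>\<in>P. \<forall>X Y. is_graph X \<longrightarrow> is_graph Y \<longrightarrow> \<psi> (tp X Y) = \<psi> X * \<psi> Y"
    and "\<forall>\<psi>\<in>P. \<exists>X. is_graph X \<and> \<psi> X \<noteq> 0"
    and "\<forall>\<psi>\<in>P. \<forall>X. \<not> is_graph X \<longrightarrow> \<psi> X = 0"
    and "\<forall>X. is_graph X \<longrightarrow> (\<Sum>\<psi>\<in>P. c \<psi> * \<psi> X) = 0"
  shows "\<forall>\<psi>\<in>P. c \<psi> = 0"
  using assms
proof (induction P arbitrary: c rule: finite_induct)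
  case empty
  then show ?case by simp
next
  case (insert \<psi>0 P)
  have multP: "\<And>\<psi> X Y. \<psi> \<in> insert \<psi>0 P \<Longrightarrow> is_graph X \<Longrightarrow> is_graph Y \<Longrightarrow> \<psi> (tp X Y) = \<psi> X * \<psi> Y"
    using insert.prems(1) by blast
  note mult = insert.prems(1) and nz = insert.prems(2) and out = insert.prems(3) and rel = insert.prems(4)
  have rel': "(\<Sum>\<psi>\<in>P. c \<psi> * \<psi> X) + c \<psi>0 * \<psi>0 X = 0" if "is_graph X" for X
  proof -
    have "(\<Sum>\<psi>\<in>insert \<psi>0 P. c \<psi> * \<psi> X) = 0" using rel that by blast
    then show ?thesis using insert.hyps by (simp add: add.commute)
  qed
  have step: "\<forall>\<psi>\<in>P. c \<psi> * (\<psi> Y - \<psi>0 Y) = 0" if Y: "is_graph Y" for Y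
  proof (rule insert.IH)
    show "\<forall>\<psi>\<in>P. \<forall>X Y. is_graph X \<longrightarrow> is_graph Y \<longrightarrow> \<psi> (tp X Y) = \<psi> X * \<psi> Y" using mult by blast
    show "\<forall>\<psi>\<in>P. \<exists>X. is_graph X \<and> \<psi> X \<noteq> 0" using nz by blast
    show "\<forall>\<psi>\<in>P. \<forall>X. \<not> is_graph X \<longrightarrow> \<psi> X = 0" using out by blast
    show "\<forall>X. is_graph X \<longrightarrow> (\<Sum>\<psi>\<in>P. c \<psi> * (\<psi> Y - \<psi>0 Y) * \<psi> X) = 0"
    proof (intro allI impI)
      fix X assume X: "is_graph X"
      have A: "(\<Sum>\<psi>\<in>P. c \<psi> * (\<psi> X * \<psi> Y)) + c \<psi>0 * (\<psi>0 X * \<psi>0 Y) = 0"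
      proof -
        have "(\<Sum>\<psi>\<in>P. c \<psi> * \<psi> (tp X Y)) + c \<psi>0 * \<psi>0 (tp X Y) = 0"
          using rel' tp_graph[OF X Y] by blast
        moreover have "(\<Sum>\<psi>\<in>P. c \<psi> * \<psi> (tp X Y)) = (\<Sum>\<psi>\<in>P. c \<psi> * (\<psi> X * \<psi> Y))"
          by (rule sum.cong[OF refl]) (simp add: multP X Y)
        moreover have "\<psi>0 (tp X Y) = \<psi>0 X * \<psi>0 Y" using multP X Y by blast
        ultimately show ?thesis by simp
      qed
      have B: "\<psi>0 Y * ((\<Sum>\<psi>\<in>P. c \<psi> * \<psi> X) + c \<psi>0 * \<psi>0 X) = 0" using rel' X by simp
      have "(\<Sum>\<psi>\<in>P. c \<psi> * (\<psi> Y - \<psi>0 Y) * \<psi> X) =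
            (\<Sum>\<psi>\<in>P. c \<psi> * (\<psi> X * \<psi> Y)) - \<psi>0 Y * (\<Sum>\<psi>\<in>P. c \<psi> * \<psi> X)"
        by (simp add: sum_distrib_left sum_subtractf[symmetric] algebra_simps)
      also have "\<dots> = 0" using A B by (simp add: algebra_simps)
      finally show "(\<Sum>\<psi>\<in>P. c \<psi> * (\<psi> Y - \<psi>0 Y) * \<psi> X) = 0" .
    qed
  qed
  have cP: "c \<psi> = 0" if "\<psi> \<in> P" for \<psi>
  proof -
    have "\<psi> \<noteq> \<psi>0" using that insert.hyps by blast
    then obtain Y where "\<psi> Y \<noteq> \<psi>0 Y" by (auto simp: fun_eq_iff)
    moreover have "is_graph Y"
    proof (rule ccontr)
      assume "\<not> is_graph Y"
      then have "\<psi> Y = 0" "\<psi>0 Y = 0" using out that by blast+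
      with \<open>\<psi> Y \<noteq> \<psi>0 Y\<close> show False by simp
    qed
    ultimately show ?thesis using step[of Y] that by auto
  qed
  obtain X where X: "is_graph X" "\<psi>0 X \<noteq> 0" using nz by blast
  have "(\<Sum>\<psi>\<in>P. c \<psi> * \<psi> X) = 0" using cP by simp
  then have "c \<psi>0 * \<psi>0 X = 0" using rel'[OF X(1)] by simp
  then have "c \<psi>0 = 0" using X by simp
  then show ?case using cP by simp
qed

definition Xm :: "nat \<Rightarrow> graph" where
  "Xm m = ({0..m}, {(a,b). a \<le> m \<and> b \<le> m \<and> (a \<noteq> 0 \<or> b \<noteq> 0)})"

lemma Xm_graph: "is_graph (Xm m)"
  unfolding is_graph_def Xm_def sym_def by auto

definition P2 :: "nat set \<Rightarrow> nat set set" where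
  "P2 V = {e. e \<subseteq> V \<and> card e = 2}"

definition indep :: "nat set set \<Rightarrow> nat set \<Rightarrow> bool" where
  "indep S I \<longleftrightarrow> (\<forall>e\<in>S. \<not> e \<subseteq> I)"

lemma card_zero_fiber:
  assumes "finite V" "I \<subseteq> V"
  shows "card {f \<in> V \<rightarrow>\<^sub>E {0..m}. {v\<in>V. f v = 0} = I} = m ^ card (V - I)"
proof -
  let ?A = "{f \<in> V \<rightarrow>\<^sub>E {0..m}. {v\<in>V. f v = 0} = I}"
  let ?B = "(V - I) \<rightarrow>\<^sub>E {1..m}"
  have "bij_betw (\<lambda>f. restrict f (V - I)) ?A ?B"
  proof (rule bij_betw_byWitness[where f'="\<lambda>g. \<lambda>v. if v \<in> I then 0 else g v"])
    show "\<forall>a\<in>?A. (\<lambda>v. if v \<in> I then 0 else restrict a (V - I) v) = a"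
    proof
      fix a assume a: "a \<in> ?A"
      show "(\<lambda>v. if v \<in> I then 0 else restrict a (V - I) v) = a"
      proof
        fix v show "(if v \<in> I then 0 else restrict a (V - I) v) = a v"
          using a assms(2) by (cases "v \<in> V") (auto simp: PiE_def extensional_def)
      qed
    qed
    show "\<forall>a'\<in>?B. restrict (\<lambda>v. if v \<in> I then 0 else a' v) (V - I) = a'"
      by (auto simp: PiE_def extensional_def fun_eq_iff)
    show "(\<lambda>f. restrict f (V - I)) ` ?A \<subseteq> ?B"
      by (auto simp: PiE_def Pi_def)
    show "(\<lambda>g v. if v \<in> I then 0 else g v) ` ?B \<subseteq> ?A"
      using assms(2) by (auto simp: PiE_def Pi_def extensional_def split: if_splits; fastforce)
  qed
  then have "card ?A = card ?B" by (rule bij_betw_same_card)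
  also have "\<dots> = m ^ card (V - I)" using assms by (simp add: card_PiE)
  finally show ?thesis .
qed


lemma hom_Xm:
  assumes V: "finite V" and S: "S \<subseteq> P2 V"
  shows "hom (V, eo S) (Xm m) = (\<Sum>I\<in>{I\<in>Pow V. indep S I}. m ^ (card V - card I))"
proof -
  define Z where "Z f = {v\<in>V. f v = 0}" for f :: "nat \<Rightarrow> nat"
  define A where "A I = {f \<in> V \<rightarrow>\<^sub>E {0..m}. Z f = I}" for I
  have Se: "\<exists>u v. u \<in> V \<and> v \<in> V \<and> u \<noteq> v \<and> e = {u,v}" if "e \<in> S" for e
  proof -
    have "e \<subseteq> V" "card e = 2" using S that by (auto simp: P2_def)
    then show ?thesis by (auto simp: card_2_iff)
  qed
  have H: "homs (V, eo S) (Xm m) = (\<Union>I\<in>{I\<in>Pow V. indep S I}. A I)"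
  proof (intro equalityI subsetI)
    fix f assume f: "f \<in> homs (V, eo S) (Xm m)"
    then have fM: "f \<in> V \<rightarrow>\<^sub>E {0..m}" by (simp add: homs_def Xm_def)
    have "indep S (Z f)" unfolding indep_def
    proof
      fix e assume "e \<in> S"
      then obtain u v where uv: "u \<in> V" "v \<in> V" "u \<noteq> v" "e = {u,v}" using Se by blast
      then have "(u,v) \<in> eo S" using \<open>e \<in> S\<close> by (simp add: eo_def)
      then have "(f u, f v) \<in> edges (Xm m)" using f by (auto simp: homs_def)
      then show "\<not> e \<subseteq> Z f" using uv by (auto simp: Xm_def Z_def)
    qed
    then show "f \<in> (\<Union>I\<in>{I\<in>Pow V. indep S I}. A I)" using fM
      by (auto simp: A_def Z_def)
  next
    fix f assume "f \<in> (\<Union>I\<in>{I\<in>Pow V. indep S I}. A I)"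
    then have fM: "f \<in> V \<rightarrow>\<^sub>E {0..m}" and ind: "indep S (Z f)" by (auto simp: A_def)
    have "(f u, f v) \<in> edges (Xm m)" if uv: "(u,v) \<in> eo S" for u v
    proof -
      have "{u,v} \<in> S" "u \<noteq> v" using uv by (auto simp: eo_def)
      then have "{u,v} \<subseteq> V" using S by (auto simp: P2_def)
      then have "f u \<le> m" "f v \<le> m" using fM by auto
      moreover have "\<not> {u,v} \<subseteq> Z f" using ind \<open>{u,v} \<in> S\<close> by (auto simp: indep_def)
      ultimately show ?thesis using \<open>{u,v} \<subseteq> V\<close> by (auto simp: Xm_def Z_def)
    qed
    note hx = this
    have vX: "verts (Xm m) = {0..m}" by (simp add: Xm_def)
    show "f \<in> homs (V, eo S) (Xm m)" using fM hx unfolding homs_def vX by auto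
  qed
  have "hom (V, eo S) (Xm m) = (\<Sum>I\<in>{I\<in>Pow V. indep S I}. card (A I))"
    unfolding hom_def H
  proof (rule card_UN_disjoint)
    show "finite {I\<in>Pow V. indep S I}" using V by simp
    show "\<forall>i\<in>{I\<in>Pow V. indep S I}. finite (A i)"
      using V by (auto simp: A_def intro: finite_subset[OF _ finite_PiE[of V "\<lambda>_. {0..m}"]])
    show "\<forall>i\<in>{I\<in>Pow V. indep S I}. \<forall>j\<in>{I\<in>Pow V. indep S I}. i \<noteq> j \<longrightarrow> A i \<inter> A j = {}"
      by (auto simp: A_def)
  qed
  also have "\<dots> = (\<Sum>I\<in>{I\<in>Pow V. indep S I}. m ^ (card V - card I))"
  proof (rule sum.cong[OF refl])
    fix I assume "I \<in> {I\<in>Pow V. indep S I}"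
    then have I: "I \<subseteq> V" by auto
    have "card (A I) = m ^ card (V - I)" unfolding A_def Z_def using card_zero_fiber[OF V I] .
    also have "card (V - I) = card V - card I" using V I by (simp add: card_Diff_subset finite_subset)
    finally show "card (A I) = m ^ (card V - card I)" .
  qed
  finally show ?thesis .
qed

lemma edge_count:
  assumes V: "finite V" and S: "S \<subseteq> P2 V" and T: "T \<subseteq> P2 V"
    and eq: "\<forall>m. hom (V, eo S) (Xm m) = hom (V, eo T) (Xm m)"
  shows "card S = card T"
proof (cases "card V \<ge> 2")
  case False
  have "P2 V = {}"
  proof (rule ccontr)
    assume "P2 V \<noteq> {}"
    then obtain e where e: "e \<subseteq> V" "card e = 2" by (auto simp: P2_def)
    have "card e \<le> card V" using V e(1) by (rule card_mono)
    then have "card V \<ge> 2" using e(2) by simp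
    with False show False by simp
  qed
  then show ?thesis using S T by simp
next
  case True
  let ?n = "card V"
  define p where "p S = (\<Sum>I\<in>{I\<in>Pow V. indep S I}. monom (1::int) (?n - card I))" for S
  have pe: "poly (p S) (int m) = int (hom (V, eo S) (Xm m))" if "S \<subseteq> P2 V" for S m
    by (simp add: p_def hom_Xm[OF V that] poly_sum poly_monom)
  have "p S = p T"
  proof (rule ccontr)
    assume "p S \<noteq> p T"
    then have "p S - p T \<noteq> 0" by simp
    then have fin: "finite {x. poly (p S - p T) x = 0}" by (rule poly_roots_finite)
    have "range int \<subseteq> {x. poly (p S - p T) x = 0}"
      using pe[OF S] pe[OF T] eq by auto
    then have "finite (range int)" using fin finite_subset by blast
    moreover have "infinite (range int)" by (metis finite_imageD inj_of_nat infinite_UNIV_nat)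
    ultimately show False by contradiction
  qed
  have cf: "coeff (p S) (?n - 2) = int (card (P2 V - S))" if S: "S \<subseteq> P2 V" for S
  proof -
    have "coeff (p S) (?n - 2) = (\<Sum>I\<in>{I\<in>Pow V. indep S I}. if ?n - card I = ?n - 2 then 1 else 0)"
      by (simp add: p_def coeff_sum)
    also have "\<dots> = (\<Sum>I\<in>{I\<in>Pow V. indep S I}. if card I = 2 then 1 else 0)"
    proof (rule sum.cong[OF refl])
      fix I assume "I \<in> {I\<in>Pow V. indep S I}"
      then have "card I \<le> ?n" using V by (simp add: card_mono)
      then have "?n - card I = ?n - 2 \<longleftrightarrow> card I = 2" using True by linarith
      then show "(if ?n - card I = ?n - 2 then 1 else 0) = (if card I = 2 then 1 else (0::int))" by simp
    qed
    also have "\<dots> = int (card {I\<in>{I\<in>Pow V. indep S I}. card I = 2})"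
      using V by (intro card_filter_int[symmetric]) simp
    also have "{I\<in>{I\<in>Pow V. indep S I}. card I = 2} = P2 V - S"
    proof (intro equalityI subsetI)
      fix I assume "I \<in> {I\<in>{I\<in>Pow V. indep S I}. card I = 2}"
      then show "I \<in> P2 V - S" by (auto simp: P2_def indep_def)
    next
      fix I assume I: "I \<in> P2 V - S"
      have "indep S I" unfolding indep_def
      proof (intro ballI notI)
        fix e assume "e \<in> S" "e \<subseteq> I"
        have "finite I" using I V by (auto simp: P2_def intro: finite_subset)
        moreover have "card e = card I" using \<open>e \<in> S\<close> S I by (auto simp: P2_def)
        ultimately have "e = I" using \<open>e \<subseteq> I\<close> card_subset_eq by blast
        then show False using I \<open>e \<in> S\<close> by simp
      qed
      then show "I \<in> {I\<in>{I\<in>Pow V. indep S I}. card I = 2}" using I by (auto simp: P2_def)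
    qed
    finally show ?thesis .
  qed
  have fP: "finite (P2 V)" using V by (auto simp: P2_def intro: finite_subset[of _ "Pow V"])
  have "card (P2 V - S) = card (P2 V - T)" using cf[OF S] cf[OF T] \<open>p S = p T\<close> by simp
  then have "card (P2 V) - card S = card (P2 V) - card T"
    using S T fP by (simp add: card_Diff_subset finite_subset)
  moreover have "card S \<le> card (P2 V)" "card T \<le> card (P2 V)" using S T fP by (auto intro: card_mono)
  ultimately show ?thesis by linarith
qed




lemma simple_sub: "simple_graph F \<Longrightarrow> edges F \<subseteq> verts F \<times> verts F"
  by (simp add: simple_graph_def is_graph_def)

lemma simple_is_graph: "simple_graph F \<Longrightarrow> is_graph F"
  by (simp add: simple_graph_def)

lemma hom_equiv_tp:
  assumes "\<forall>F\<in>\<A>. simple_graph F" "hom_equiv \<A> G H"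
  shows "hom_equiv \<A> (tp G X) (tp H X)"
  using assms by (auto simp: hom_equiv_def hom_tp simple_sub)

lemma L12a:
  assumes A: "\<forall>F\<in>\<A>. simple_graph F" and D: "closed_del_edges \<A>"
    and G: "is_graph G" and H: "is_graph H" and e: "hom_equiv \<A> G H"
  shows "hom_equiv \<A> (full_compl G) (full_compl H)"
  unfolding hom_equiv_def
proof
  fix F assume F: "F \<in> \<A>"
  have sF: "simple_graph F" using A F by blast
  have mem: "(verts F, eo S) \<in> \<A>" if "S \<in> Pow (uedges (edges F))" for S
    using D F eo_sub[OF sF] sym_eo that unfolding closed_del_edges_def by blast
  have "int (hom F (full_compl G)) = (\<Sum>S\<in>Pow (uedges (edges F)). (-1)^card S * int (hom (verts F, eo S) G))"
    using IE[OF sF G] .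
  also have "\<dots> = (\<Sum>S\<in>Pow (uedges (edges F)). (-1)^card S * int (hom (verts F, eo S) H))"
    using mem e by (intro sum.cong refl) (auto simp: hom_equiv_def)
  also have "\<dots> = int (hom F (full_compl H))" using IE[OF sF H] by simp
  finally show "hom F (full_compl G) = hom F (full_compl H)" by simp
qed

lemma L12:
  assumes A: "\<forall>F\<in>\<A>. simple_graph F" and D: "closed_del_edges \<A>"
  shows "compl_preserved \<A>"
  unfolding compl_preserved_def
proof (intro allI impI iffI)
  fix G H assume G: "simple_graph G" and H: "simple_graph H"
  note G' = simple_is_graph[OF G] and H' = simple_is_graph[OF H]
  { assume "hom_equiv \<A> G H"
    then show "hom_equiv \<A> (full_compl G) (full_compl H)" using L12a[OF A D G' H'] by blast }
  { assume "hom_equiv \<A> (full_compl G) (full_compl H)"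
    then have "hom_equiv \<A> (full_compl (full_compl G)) (full_compl (full_compl H))"
      using L12a[OF A D compl_graph[OF G'] compl_graph[OF H']] by blast
    then show "hom_equiv \<A> G H" using compl_compl[OF G'] compl_compl[OF H'] by simp }
qed

lemma cl_simple: "K \<in> cl \<F> \<Longrightarrow> simple_graph K" by (simp add: cl_def)

lemma cl_hom: "K \<in> cl \<F> \<Longrightarrow> simple_graph G \<Longrightarrow> simple_graph H \<Longrightarrow> hom_equiv \<F> G H \<Longrightarrow> hom K G = hom K H"
  unfolding cl_def by blast

lemma EXT:
  assumes K: "K \<in> cl \<F>" and Fs: "\<forall>F\<in>\<F>. simple_graph F"
    and A: "is_graph A" and B: "is_graph B" and e: "hom_equiv \<F> A B"
  shows "hom K A = hom K B"
proof -
  have sK: "simple_graph K" using K by (rule cl_simple)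
  define Km where "Km = (verts K, {(u,v). u \<in> verts K \<and> v \<in> verts K \<and> u \<noteq> v})"
  have fK: "finite (verts K)" using sK by (simp add: simple_graph_def is_graph_def)
  have Kmg: "is_graph Km" using fK unfolding Km_def is_graph_def sym_def by auto
  have Kml: "\<forall>v. (v,v) \<notin> edges Km" by (simp add: Km_def)
  have s1: "simple_graph (tp A Km)" using tp_simple[OF A Kmg] Kml by blast
  have s2: "simple_graph (tp B Km)" using tp_simple[OF B Kmg] Kml by blast
  have "hom_equiv \<F> (tp A Km) (tp B Km)" using hom_equiv_tp[OF Fs e] .
  then have "hom K (tp A Km) = hom K (tp B Km)" using cl_hom[OF K s1 s2] by blast
  then have eq: "hom K A * hom K Km = hom K B * hom K Km" using hom_tp[OF simple_sub[OF sK]] by simp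
  have "restrict id (verts K) \<in> homs K Km"
    using simple_sub[OF sK] sK unfolding homs_def Km_def simple_graph_def by auto
  moreover have "finite (homs K Km)" using fK by (intro homs_finite) (auto simp: Km_def)
  ultimately have "hom K Km \<noteq> 0" unfolding hom_def by (metis card_0_eq empty_iff)
  then show ?thesis using eq by simp
qed


lemma CORE:
  assumes sK: "simple_graph K" and G: "is_graph G" and H: "is_graph H"
    and rel: "\<forall>X. is_graph X \<longrightarrow> hom K (full_compl (tp G X)) = hom K (full_compl (tp H X))"
    and S0: "S0 \<subseteq> uedges (edges K)"
  shows "hom (verts K, eo S0) G = hom (verts K, eo S0) H"
proof -
  let ?U = "uedges (edges K)"
  let ?V = "verts K"
  have fV: "finite ?V" using sK by (simp add: simple_graph_def is_graph_def)
  have EK: "edges K \<subseteq> ?V \<times> ?V" using simple_sub[OF sK] .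
  have fU: "finite ?U" using fV EK unfolding uedges_def
    by (meson finite_SigmaI finite_imageI finite_subset)
  have UP2: "?U \<subseteq> P2 ?V"
  proof
    fix e assume "e \<in> ?U"
    then obtain a b where ab: "(a,b) \<in> edges K" "e = {a,b}" unfolding mem_uedges by blast
    have "a \<noteq> b" using ab sK by (auto simp: simple_graph_def)
    moreover have "a \<in> ?V" "b \<in> ?V" using ab EK by auto
    ultimately show "e \<in> P2 ?V" using ab by (auto simp: P2_def)
  qed
  have sub: "edges (?V, eo S) \<subseteq> verts (?V, eo S) \<times> verts (?V, eo S)" if "S \<subseteq> ?U" for S
    using eo_sub[OF sK that] EK by auto
  define \<phi> where "\<phi> S = (\<lambda>X. if is_graph X then int (hom (?V, eo S) X) else 0)" for S
  define d where "d S = (-1)^card S * (int (hom (?V, eo S) G) - int (hom (?V, eo S) H))" for S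
  define P where "P = \<phi> ` Pow ?U"
  define c where "c \<psi> = (\<Sum>S\<in>{S\<in>Pow ?U. \<phi> S = \<psi>}. d S)" for \<psi>
  have R: "(\<Sum>S\<in>Pow ?U. d S * \<phi> S X) = 0" if X: "is_graph X" for X
  proof -
    have "hom K (full_compl (tp G X)) = hom K (full_compl (tp H X))" using rel X by blast
    then have "int (hom K (full_compl (tp G X))) = int (hom K (full_compl (tp H X)))" by simp
    then have "(\<Sum>S\<in>Pow ?U. (-1)^card S * int (hom (?V, eo S) (tp G X))) =
               (\<Sum>S\<in>Pow ?U. (-1)^card S * int (hom (?V, eo S) (tp H X)))"
      unfolding IE[OF sK tp_graph[OF G X]] IE[OF sK tp_graph[OF H X]] .
    then have "(\<Sum>S\<in>Pow ?U. (-1)^card S * int (hom (?V, eo S) (tp G X))) -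
               (\<Sum>S\<in>Pow ?U. (-1)^card S * int (hom (?V, eo S) (tp H X))) = 0" by simp
    then have "(\<Sum>S\<in>Pow ?U. (-1)^card S * int (hom (?V, eo S) (tp G X)) - (-1)^card S * int (hom (?V, eo S) (tp H X))) = 0"
      by (simp add: sum_subtractf)
    moreover have "(\<Sum>S\<in>Pow ?U. (-1)^card S * int (hom (?V, eo S) (tp G X)) - (-1)^card S * int (hom (?V, eo S) (tp H X)))
        = (\<Sum>S\<in>Pow ?U. d S * \<phi> S X)"
    proof (rule sum.cong[OF refl])
      fix S assume "S \<in> Pow ?U"
      then have "S \<subseteq> ?U" by simp
      then show "(-1)^card S * int (hom (?V, eo S) (tp G X)) - (-1)^card S * int (hom (?V, eo S) (tp H X)) = d S * \<phi> S X"
        using hom_tp[OF sub] X by (simp add: d_def \<phi>_def algebra_simps)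
    qed
    ultimately show ?thesis by simp
  qed
  have cz: "\<forall>\<psi>\<in>P. c \<psi> = 0"
  proof (rule artin)
    show "finite P" using fU by (simp add: P_def)
    show "\<forall>\<psi>\<in>P. \<forall>X Y. is_graph X \<longrightarrow> is_graph Y \<longrightarrow> \<psi> (tp X Y) = \<psi> X * \<psi> Y"
      unfolding P_def using hom_tp[OF sub] tp_graph by (auto simp: \<phi>_def)
    show "\<forall>\<psi>\<in>P. \<exists>X. is_graph X \<and> \<psi> X \<noteq> 0"
    proof
      fix \<psi> assume "\<psi> \<in> P"
      then obtain S where S: "\<psi> = \<phi> S" "S \<subseteq> ?U" by (auto simp: P_def)
      define X0 where "X0 = ({0::nat}, {(0::nat,0::nat)})"
      have X0: "is_graph X0" by (simp add: X0_def is_graph_def sym_def)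
      have "(\<lambda>v\<in>?V. 0) \<in> homs (?V, eo S) X0" using sub[OF S(2)] by (auto simp: homs_def X0_def)
      moreover have "finite (homs (?V, eo S) X0)" using fV by (intro homs_finite) (auto simp: X0_def)
      ultimately have "hom (?V, eo S) X0 \<noteq> 0" unfolding hom_def by (metis card_0_eq empty_iff)
      then have "\<psi> X0 \<noteq> 0" using X0 S by (simp add: \<phi>_def)
      then show "\<exists>X. is_graph X \<and> \<psi> X \<noteq> 0" using X0 by blast
    qed
    show "\<forall>\<psi>\<in>P. \<forall>X. \<not> is_graph X \<longrightarrow> \<psi> X = 0" by (auto simp: P_def \<phi>_def)
    show "\<forall>X. is_graph X \<longrightarrow> (\<Sum>\<psi>\<in>P. c \<psi> * \<psi> X) = 0"
    proof (intro allI impI)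
      fix X assume X: "is_graph X"
      have "(\<Sum>S\<in>Pow ?U. d S * \<phi> S X) = (\<Sum>\<psi>\<in>\<phi> ` Pow ?U. \<Sum>S\<in>{S\<in>Pow ?U. \<phi> S = \<psi>}. d S * \<phi> S X)"
        using fU by (intro sum.image_gen) simp
      also have "\<dots> = (\<Sum>\<psi>\<in>P. c \<psi> * \<psi> X)"
        unfolding P_def c_def by (intro sum.cong refl) (simp add: sum_distrib_right)
      finally show "(\<Sum>\<psi>\<in>P. c \<psi> * \<psi> X) = 0" using R[OF X] by simp
    qed
  qed
  define Q where "Q = {S\<in>Pow ?U. \<phi> S = \<phi> S0}"
  define \<delta> where "\<delta> = int (hom (?V, eo S0) G) - int (hom (?V, eo S0) H)"
  have "c (\<phi> S0) = 0" using cz S0 by (auto simp: P_def)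
  moreover have "c (\<phi> S0) = (\<Sum>S\<in>Q. (-1)^card S0 * \<delta>)"
    unfolding c_def Q_def[symmetric]
  proof (rule sum.cong[OF refl])
    fix S assume "S \<in> Q"
    then have S: "S \<subseteq> ?U" and ph: "\<phi> S = \<phi> S0" by (auto simp: Q_def)
    have "\<phi> S G = \<phi> S0 G" "\<phi> S H = \<phi> S0 H" using ph by simp_all
    then have h: "hom (?V, eo S) G = hom (?V, eo S0) G" "hom (?V, eo S) H = hom (?V, eo S0) H"
      using G H by (simp_all add: \<phi>_def)
    have "\<forall>m. hom (?V, eo S) (Xm m) = hom (?V, eo S0) (Xm m)"
    proof
      fix m have "\<phi> S (Xm m) = \<phi> S0 (Xm m)" using ph by simp
      then show "hom (?V, eo S) (Xm m) = hom (?V, eo S0) (Xm m)" using Xm_graph by (simp add: \<phi>_def)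
    qed
    then have "card S = card S0" using edge_count[OF fV] S S0 UP2 by blast
    then show "d S = (-1)^card S0 * \<delta>" by (simp add: d_def \<delta>_def h)
  qed
  ultimately have "card Q * ((-1)^card S0 * \<delta>) = 0" by simp
  moreover have "card Q \<noteq> 0"
  proof -
    have "S0 \<in> Q" using S0 by (simp add: Q_def)
    moreover have "finite Q" using fU by (simp add: Q_def)
    ultimately show ?thesis by (metis card_0_eq empty_iff)
  qed
  ultimately have "\<delta> = 0" by simp
  then show ?thesis by (simp add: \<delta>_def)
qed




lemma DEC:
  assumes V: "finite V" and V': "V' \<subseteq> V" and E': "E' \<subseteq> V' \<times> V'"
  shows "hom (V, E') G = hom (V', E') G * card (verts G) ^ card (V - V')"
proof -
  let ?A = "homs (V, E') G"
  let ?B = "homs (V', E') G \<times> ((V - V') \<rightarrow>\<^sub>E verts G)"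
  have "bij_betw (\<lambda>f. (restrict f V', restrict f (V - V'))) ?A ?B"
  proof (rule bij_betw_byWitness[where f'="\<lambda>(g,h). \<lambda>v. if v \<in> V' then g v else h v"])
    show "\<forall>a\<in>?A. (\<lambda>(g,h). \<lambda>v. if v \<in> V' then g v else h v) (restrict a V', restrict a (V - V')) = a"
    proof
      fix a assume a: "a \<in> ?A"
      show "(\<lambda>(g,h). \<lambda>v. if v \<in> V' then g v else h v) (restrict a V', restrict a (V - V')) = a"
      proof
        fix v show "(\<lambda>(g,h). \<lambda>v. if v \<in> V' then g v else h v) (restrict a V', restrict a (V - V')) v = a v"
          using a V' by (cases "v \<in> V") (auto simp: homs_def PiE_def extensional_def)
      qed
    qed
    show "\<forall>a'\<in>?B. (\<lambda>f. (restrict f V', restrict f (V - V'))) ((\<lambda>(g,h). \<lambda>v. if v \<in> V' then g v else h v) a') = a'"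
    proof
      fix a' assume "a' \<in> ?B"
      then obtain g h where a': "a' = (g,h)" "g \<in> extensional V'" "h \<in> extensional (V - V')"
        by (auto simp: homs_def PiE_def)
      have "restrict (\<lambda>v. if v \<in> V' then g v else h v) V' = g"
        using a'(2) by (auto simp: fun_eq_iff extensional_def)
      moreover have "restrict (\<lambda>v. if v \<in> V' then g v else h v) (V - V') = h"
        using a'(3) by (auto simp: fun_eq_iff extensional_def)
      ultimately show "(\<lambda>f. (restrict f V', restrict f (V - V'))) ((\<lambda>(g,h). \<lambda>v. if v \<in> V' then g v else h v) a') = a'"
        using a'(1) by simp
    qed
    show "(\<lambda>f. (restrict f V', restrict f (V - V'))) ` ?A \<subseteq> ?B"
    proof
      fix y assume "y \<in> (\<lambda>f. (restrict f V', restrict f (V - V'))) ` ?A"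
      then obtain f where f: "f \<in> ?A" and y: "y = (restrict f V', restrict f (V - V'))" by blast
      have fP: "f \<in> V \<rightarrow>\<^sub>E verts G" and fE: "\<forall>(u,v)\<in>E'. (f u, f v) \<in> edges G"
        using f by (auto simp: homs_def)
      have "restrict f V' \<in> V' \<rightarrow>\<^sub>E verts G" using fP V' by auto
      moreover have "\<forall>(u,v)\<in>E'. (restrict f V' u, restrict f V' v) \<in> edges G" using fE E' by auto
      ultimately have "restrict f V' \<in> homs (V', E') G" by (simp add: homs_def)
      moreover have "restrict f (V - V') \<in> (V - V') \<rightarrow>\<^sub>E verts G" using fP by auto
      ultimately show "y \<in> ?B" using y by simp
    qed
    show "(\<lambda>(g,h). \<lambda>v. if v \<in> V' then g v else h v) ` ?B \<subseteq> ?A"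
    proof
      fix y assume "y \<in> (\<lambda>(g,h). \<lambda>v. if v \<in> V' then g v else h v) ` ?B"
      then obtain p where p: "p \<in> ?B" and yp: "y = (\<lambda>(g,h). \<lambda>v. if v \<in> V' then g v else h v) p"
        by (rule imageE)
      obtain g h where ghp: "p = (g,h)" by (cases p)
      have gh: "g \<in> homs (V', E') G" "h \<in> (V - V') \<rightarrow>\<^sub>E verts G" using p ghp by auto
      have y: "y = (\<lambda>v. if v \<in> V' then g v else h v)" using yp ghp by simp
      have gP: "g \<in> V' \<rightarrow>\<^sub>E verts G" and gE: "\<forall>(u,v)\<in>E'. (g u, g v) \<in> edges G"
        using gh(1) by (auto simp: homs_def)
      have "y \<in> V \<rightarrow>\<^sub>E verts G" unfolding PiE_iff
      proof
        show "\<forall>x\<in>V. y x \<in> verts G"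
        proof
          fix x assume "x \<in> V"
          show "y x \<in> verts G"
          proof (cases "x \<in> V'")
            case True then show ?thesis using gP y by auto
          next
            case False then show ?thesis using gh(2) y \<open>x \<in> V\<close> by auto
          qed
        qed
        show "y \<in> extensional V"
          unfolding extensional_def
        proof (intro CollectI allI impI)
          fix x assume "x \<notin> V"
          then have "x \<notin> V'" "x \<notin> V - V'" using V' by auto
          then show "y x = undefined" using gh(2) y by (simp add: PiE_def extensional_def)
        qed
      qed
      moreover have "\<forall>(u,v)\<in>E'. (y u, y v) \<in> edges G"
      proof (intro ballI, clarify)
        fix u v assume uv: "(u,v) \<in> E'"
        then have "u \<in> V'" "v \<in> V'" using E' by auto
        then show "(y u, y v) \<in> edges G" using gE uv y by auto
      qed
      ultimately show "y \<in> ?A" by (simp add: homs_def)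
    qed
  qed
  then have "card ?A = card ?B" by (rule bij_betw_same_card)
  also have "\<dots> = card (homs (V', E') G) * card ((V - V') \<rightarrow>\<^sub>E verts G)"
    by (rule card_cartesian_product)
  also have "card ((V - V') \<rightarrow>\<^sub>E verts G) = card (verts G) ^ card (V - V')"
    using V by (simp add: card_PiE)
  finally show ?thesis by (simp add: hom_def)
qed

lemma hom_empty: "hom ({}, {}) G = 1"
  by (simp add: hom_def homs_def)

lemma DEL:
  assumes sK: "simple_graph K" and E': "E' \<subseteq> edges K" "sym E'"
  shows "simple_graph (verts K, E')" "eo (uedges E') = E'" "uedges E' \<subseteq> uedges (edges K)"
proof -
  show "simple_graph (verts K, E')" using sK E' by (auto simp: simple_graph_def is_graph_def)
  show "uedges E' \<subseteq> uedges (edges K)" using E' by (auto simp: uedges_def)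
  show "eo (uedges E') = E'"
  proof (intro equalityI subsetI)
    fix p assume "p \<in> eo (uedges E')"
    then obtain u v where p: "p = (u,v)" "u \<noteq> v" "{u,v} \<in> uedges E'" by (auto simp: eo_def)
    then obtain a b where ab: "(a,b) \<in> E'" "{u,v} = {a,b}" unfolding mem_uedges by blast
    then have "(u=a \<and> v=b) \<or> (u=b \<and> v=a)" by (simp add: doubleton_eq_iff)
    then show "p \<in> E'" using ab E'(2) p unfolding sym_def by auto
  next
    fix p assume p: "p \<in> E'"
    obtain u v where uv: "p = (u,v)" by force
    have "u \<noteq> v" using p uv E'(1) sK by (auto simp: simple_graph_def)
    moreover have "{u,v} \<in> uedges E'" using p uv by (auto simp: mem_uedges)
    ultimately show "p \<in> eo (uedges E')" using uv by (simp add: eo_def)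
  qed
qed

lemma five_three:
  assumes C: "compl_preserved (cl \<F>)"
  shows "closed_del_edges (cl \<F>)"
  unfolding closed_del_edges_def
proof (intro ballI allI impI)
  fix K E' assume K: "K \<in> cl \<F>" and E': "E' \<subseteq> edges K \<and> sym E'"
  have sK: "simple_graph K" using K by (rule cl_simple)
  note D = DEL[OF sK conjunct1[OF E'] conjunct2[OF E']]
  have "hom (verts K, E') G = hom (verts K, E') H"
    if G: "simple_graph G" and H: "simple_graph H" and e: "hom_equiv \<F> G H" for G H
  proof -
    have "\<forall>X. is_graph X \<longrightarrow> hom K (full_compl (tp G X)) = hom K (full_compl (tp H X))"
    proof (intro allI impI)
      fix X assume X: "is_graph X"
      have sGX: "simple_graph (tp G X)" using tp_simple[OF simple_is_graph[OF G] X] G by (simp add: simple_graph_def)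
      have sHX: "simple_graph (tp H X)" using tp_simple[OF simple_is_graph[OF H] X] H by (simp add: simple_graph_def)
      have "hom_equiv (cl \<F>) (tp G X) (tp H X)"
        unfolding hom_equiv_def
      proof
        fix K' assume K': "K' \<in> cl \<F>"
        have "hom K' G = hom K' H" using cl_hom[OF K' G H e] .
        then show "hom K' (tp G X) = hom K' (tp H X)"
          using hom_tp[OF simple_sub[OF cl_simple[OF K']]] by simp
      qed
      then have "hom_equiv (cl \<F>) (full_compl (tp G X)) (full_compl (tp H X))"
        using C sGX sHX unfolding compl_preserved_def by blast
      then show "hom K (full_compl (tp G X)) = hom K (full_compl (tp H X))"
        using K by (simp add: hom_equiv_def)
    qed
    from CORE[OF sK simple_is_graph[OF G] simple_is_graph[OF H] this D(3)]
    show ?thesis using D(2) by simp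
  qed
  then show "(verts K, E') \<in> cl \<F>" using D(1) by (simp add: cl_def)
qed

lemma two_three:
  assumes Fs: "\<forall>F\<in>\<F>. simple_graph F" and C: "compl_preserved \<F>"
  shows "closed_del_edges (cl \<F>)"
  unfolding closed_del_edges_def
proof (intro ballI allI impI)
  fix K E' assume K: "K \<in> cl \<F>" and E': "E' \<subseteq> edges K \<and> sym E'"
  have sK: "simple_graph K" using K by (rule cl_simple)
  note D = DEL[OF sK conjunct1[OF E'] conjunct2[OF E']]
  have "hom (verts K, E') G = hom (verts K, E') H"
    if G: "simple_graph G" and H: "simple_graph H" and e: "hom_equiv \<F> G H" for G H
  proof -
    have "\<forall>X. is_graph X \<longrightarrow> hom K (full_compl (tp G X)) = hom K (full_compl (tp H X))"
    proof (intro allI impI)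
      fix X assume X: "is_graph X"
      have sGX: "simple_graph (tp G X)" using tp_simple[OF simple_is_graph[OF G] X] G by (simp add: simple_graph_def)
      have sHX: "simple_graph (tp H X)" using tp_simple[OF simple_is_graph[OF H] X] H by (simp add: simple_graph_def)
      have "hom_equiv \<F> (tp G X) (tp H X)" using hom_equiv_tp[OF Fs e] .
      then have "hom_equiv \<F> (full_compl (tp G X)) (full_compl (tp H X))"
        using C sGX sHX unfolding compl_preserved_def by blast
      then show "hom K (full_compl (tp G X)) = hom K (full_compl (tp H X))"
        using EXT[OF K Fs compl_graph[OF simple_is_graph[OF sGX]] compl_graph[OF simple_is_graph[OF sHX]]] by blast
    qed
    from CORE[OF sK simple_is_graph[OF G] simple_is_graph[OF H] this D(3)]
    show ?thesis using D(2) by simp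
  qed
  then show "(verts K, E') \<in> cl \<F>" using D(1) by (simp add: cl_def)
qed




lemma three_four:
  assumes D: "closed_del_edges (cl \<F>)"
  shows "closed_subgraphs (cl \<F>)"
  unfolding closed_subgraphs_def
proof (intro ballI allI impI)
  fix K V' E' assume K: "K \<in> cl \<F>" and a: "V' \<subseteq> verts K \<and> E' \<subseteq> edges K \<inter> (V' \<times> V') \<and> sym E'"
  have sK: "simple_graph K" using K by (rule cl_simple)
  let ?V = "verts K"
  have fV: "finite ?V" using sK by (simp add: simple_graph_def is_graph_def)
  have V': "V' \<subseteq> ?V" and E'K: "E' \<subseteq> edges K" and E'V: "E' \<subseteq> V' \<times> V'" and sE: "sym E'" using a by auto
  have K1: "(?V, E') \<in> cl \<F>" using D K E'K sE unfolding closed_del_edges_def by blast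
  have K0: "(?V, {}) \<in> cl \<F>" using D K unfolding closed_del_edges_def by (auto simp: sym_def)
  have sS: "simple_graph (V', E')"
    using sK V' E'K E'V sE fV by (auto simp: simple_graph_def is_graph_def intro: finite_subset)
  have "hom (V', E') G = hom (V', E') H"
    if G: "simple_graph G" and H: "simple_graph H" and e: "hom_equiv \<F> G H" for G H
  proof -
    have h1: "hom (?V, E') G = hom (?V, E') H" using cl_hom[OF K1 G H e] .
    have h0: "hom (?V, {}) G = hom (?V, {}) H" using cl_hom[OF K0 G H e] .
    have d1: "hom (?V, E') X = hom (V', E') X * card (verts X) ^ card (?V - V')" for X
      using DEC[OF fV V' E'V] .
    have d0: "hom (?V, {}) X = card (verts X) ^ card ?V" for X
      using DEC[OF fV, of "{}" "{}" X] by (simp add: hom_empty)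
    show ?thesis
    proof (cases "card (?V - V') = 0")
      case True
      then show ?thesis using h1 d1[of G] d1[of H] by simp
    next
      case False
      have "card (?V - V') \<le> card ?V" using fV by (intro card_mono) auto
      then have n: "card ?V > 0" using False by simp
      have "card (verts G) ^ card ?V = card (verts H) ^ card ?V" using h0 d0[of G] d0[of H] by simp
      then have N: "card (verts G) = card (verts H)" using power_eq_iff_eq_base[OF n, of "card (verts G)" "card (verts H)"] by simp
      show ?thesis
      proof (cases "card (verts G) = 0")
        case True
        have fG: "finite (verts G)" "finite (verts H)" using G H by (auto simp: simple_graph_def is_graph_def)
        then have "verts G = {}" "verts H = {}" using True N by auto
        moreover have "edges G \<subseteq> verts G \<times> verts G" "edges H \<subseteq> verts H \<times> verts H"
          using G H by (auto simp: simple_graph_def is_graph_def)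
        ultimately have "edges G = {}" "edges H = {}" by auto
        then have "G = H" using \<open>verts G = {}\<close> \<open>verts H = {}\<close>
          by (metis edges_def prod.collapse verts_def)
        then show ?thesis by simp
      next
        case False
        have "hom (V', E') G * card (verts G) ^ card (?V - V') = hom (V', E') H * card (verts G) ^ card (?V - V')"
          using h1 d1[of G] d1[of H] N by simp
        moreover have "card (verts G) ^ card (?V - V') \<noteq> 0" using False by simp
        ultimately show ?thesis using mult_right_cancel by blast
      qed
    qed
  qed
  then show "(V', E') \<in> cl \<F>" using sS by (simp add: cl_def)
qed

lemma four_three:
  assumes S: "closed_subgraphs (cl \<F>)"
  shows "closed_del_edges (cl \<F>)"
  unfolding closed_del_edges_def
proof (intro ballI allI impI)
  fix K E' assume K: "K \<in> cl \<F>" and a: "E' \<subseteq> edges K \<and> sym E'"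
  have "edges K \<subseteq> verts K \<times> verts K" using simple_sub[OF cl_simple[OF K]] .
  then have "verts K \<subseteq> verts K \<and> E' \<subseteq> edges K \<inter> (verts K \<times> verts K) \<and> sym E'" using a by auto
  then show "(verts K, E') \<in> cl \<F>" using S K unfolding closed_subgraphs_def by blast
qed

lemma three_five:
  assumes "closed_del_edges (cl \<F>)"
  shows "compl_preserved (cl \<F>)"
  using L12[OF _ assms] cl_simple by blast

theorem theorem13:
  fixes \<F> :: "graph set"
  assumes "\<forall>F \<in> \<F>. simple_graph F"
  shows "(closed_del_edges \<F> \<longrightarrow> compl_preserved \<F>)
    \<and> (compl_preserved \<F> \<longrightarrow> closed_del_edges (cl \<F>))
    \<and> (closed_del_edges (cl \<F>) \<longleftrightarrow> closed_subgraphs (cl \<F>))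
    \<and> (closed_subgraphs (cl \<F>) \<longleftrightarrow> compl_preserved (cl \<F>))
    \<and> (closed_del_edges (cl \<F>) \<longleftrightarrow> compl_preserved (cl \<F>))"
  using L12[OF assms] two_three[OF assms] three_four four_three three_five five_three
  by blast


end
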